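(* Let $\Omega$ be a state space with finitely many extreme points and positive cone $V_+$. If a linear map $J:V\to V$ is strictly positive with respect to an inner product $(\cdot,\cdot)$ on $V$ and satisfies $J(V_+)=V_+$, then for each extreme point $\omega^{\mathrm{ext}}$ of $\Omega$ there exists $\mu(\omega^{\mathrm{ext}})>0$ such that $J(\omega^{\mathrm{ext}})=\mu(\omega^{\mathrm{ext}})\omega^{\mathrm{ext}}$.
   Context: $V=\mathbb R^{N+1}$. A state space $\Omega\subset V$ is a compact convex set with $\mathrm{span}(\Omega)=V$ and $0\notin\mathrm{aff}(\Omega)$; $V_+=\{\lambda\omega:\lambda\ge0,\omega\in\Omega\}$. A linear map $J$ is strictly positive with respect to $(\cdot,\cdot)$ if $(x,Jy)=(Jx,y)$ for all $x,y$ and $(x,Jx)>0$ for all nonzero $x$. *)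

theory Defs
  imports "HOL-Analysis.Analysis"
begin

definition state_space :: "('a::euclidean_space) set \<Rightarrow> bool" where
  "state_space \<Omega> \<longleftrightarrow> compact \<Omega> \<and> convex \<Omega> \<and> span \<Omega> = UNIV \<and> 0 \<notin> affine hull \<Omega>"

definition pos_cone :: "('a::real_vector) set \<Rightarrow> 'a set" where
  "pos_cone \<Omega> = {l *\<^sub>R w | l w. l \<ge> 0 \<and> w \<in> \<Omega>}"

definition is_inner_product :: "('a::real_vector \<Rightarrow> 'a \<Rightarrow> real) \<Rightarrow> bool" where
  "is_inner_product ip \<longleftrightarrow> (\<forall>x. linear (ip x)) \<and> (\<forall>x y. ip x y = ip y x)
     \<and> (\<forall>x. x \<noteq> 0 \<longrightarrow> ip x x > 0)"

definition strictly_positive :: "('a::real_vector \<Rightarrow> 'a \<Rightarrow> real) \<Rightarrow> ('a \<Rightarrow> 'a) \<Rightarrow> bool" where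
  "strictly_positive ip J \<longleftrightarrow> (\<forall>x y. ip x (J y) = ip (J x) y) \<and> (\<forall>x. x \<noteq> 0 \<longrightarrow> ip x (J x) > 0)"

end

theory Submission
  imports Defs
begin

fun tele :: "('a \<Rightarrow> 'a) \<Rightarrow> real \<Rightarrow> 'a \<Rightarrow> nat \<Rightarrow> 'a::real_vector" where
  "tele J r u 0 = 0"
| "tele J r u (Suc d) = r *\<^sub>R tele J r u d + (J^^d) u"

lemma lin_funpow: "linear (J::'a::real_vector\<Rightarrow>'a) \<Longrightarrow> linear (J^^k)"
proof (induction k)
  case 0 then show ?case unfolding funpow.simps(1) by (simp add: linear_iff)
next
  case (Suc k) show ?case unfolding funpow.simps(2) by (rule linear_compose[OF Suc.IH[OF Suc.prems] Suc.prems])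
qed

lemma inj_funpow:
  fixes J :: "'a \<Rightarrow> 'a"
  assumes "\<And>x y. J x = J y \<Longrightarrow> x = y"
  shows "(J^^k) x = (J^^k) y \<Longrightarrow> x = y"
proof (induction k arbitrary: x y)
  case 0 then show ?case by simp
next
  case (Suc k) then show ?case using assms by (metis comp_apply funpow.simps(2))
qed

lemma tele_eq:
  assumes "linear J"
  shows "tele J r (J w - r *\<^sub>R w) d = (J^^d) w - r^d *\<^sub>R w"
proof (induction d)
  case 0 then show ?case by simp
next
  case (Suc d)
  have L: "linear (J^^d)" using lin_funpow[OF assms] .
  have "(J^^d) (J w - r *\<^sub>R w) = (J^^(Suc d)) w - r *\<^sub>R (J^^d) w"
    using L by (simp add: linear_diff linear_scale funpow_Suc_right del: funpow.simps)
  have "tele J r (J w - r *\<^sub>R w) (Suc d) = r *\<^sub>R ((J^^d) w - r^d *\<^sub>R w) + ((J^^(Suc d)) w - r *\<^sub>R (J^^d) w)"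
    using Suc \<open>(J^^d) (J w - r *\<^sub>R w) = _\<close> by (simp del: funpow.simps)
  also have "\<dots> = (J^^(Suc d)) w - r^(Suc d) *\<^sub>R w" by (simp add: algebra_simps del: funpow.simps)
  finally show ?case .
qed

lemma ip_lin2:
  assumes "is_inner_product ip"
  shows "ip x (a + b) = ip x a + ip x b" "ip x (c *\<^sub>R a) = c * ip x a" "ip x 0 = 0"
proof -
  have L: "linear (ip x)" using assms unfolding is_inner_product_def by blast
  show "ip x (a + b) = ip x a + ip x b" using linear_add[OF L] .
  show "ip x (c *\<^sub>R a) = c * ip x a" using linear_scale[OF L] by simp
  show "ip x 0 = 0" using linear_0[OF L] .
qed

lemma ip_nonneg:
  assumes "is_inner_product ip" "strictly_positive ip J" "linear J"
  shows "ip x ((J^^k) x) \<ge> 0"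
proof (induction k arbitrary: x rule: less_induct)
  case (less k)
  show ?case
  proof (cases "x = 0")
    case True then show ?thesis using lin_funpow[OF assms(3), of k] ip_lin2[OF assms(1)]
      by (simp add: linear_0)
  next
    case False
    show ?thesis
    proof (cases k)
      case 0 then show ?thesis using False assms(1) unfolding is_inner_product_def
        by (simp add: less_imp_le)
    next
      case (Suc m)
      show ?thesis
      proof (cases m)
        case 0
        have "ip x (J x) > 0" using False assms(2) unfolding strictly_positive_def by blast
        then show ?thesis using Suc 0 by simp
      next
        case (Suc j)
        have "(J^^k) x = J ((J^^j) (J x))" using \<open>k = Suc m\<close> Suc
          by (simp add: funpow_Suc_right funpow_swap1 del: funpow.simps)
        then have "ip x ((J^^k) x) = ip (J x) ((J^^j) (J x))"
          using assms(2) unfolding strictly_positive_def by simp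
        moreover have "j < k" using \<open>k = Suc m\<close> Suc by simp
        ultimately show ?thesis using less by simp
      qed
    qed
  qed
qed

lemma tele_pos:
  assumes "is_inner_product ip" "strictly_positive ip J" "linear J" "u \<noteq> 0" "r > 0"
  shows "ip u (tele J r u (Suc d)) > 0"
proof (induction d)
  case 0 then show ?case using assms unfolding is_inner_product_def by simp
next
  case (Suc d)
  have "ip u (tele J r u (Suc (Suc d))) = r * ip u (tele J r u (Suc d)) + ip u ((J^^(Suc d)) u)"
    using ip_lin2[OF assms(1)] by (simp del: funpow.simps)
  moreover have "ip u ((J^^(Suc d)) u) \<ge> 0" using ip_nonneg[OF assms(1-3)] .
  moreover have "r * ip u (tele J r u (Suc d)) > 0" using Suc assms(5) by (rule mult_pos_pos[rotated])
  ultimately show ?case by linarith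
qed

lemma pos_cone_mem: "x \<in> pos_cone \<Omega> \<longleftrightarrow> (\<exists>l w. x = l *\<^sub>R w \<and> l \<ge> 0 \<and> w \<in> \<Omega>)"
  unfolding pos_cone_def by blast

lemma scale_one:
  assumes "0 \<notin> affine hull \<Omega>" "p \<in> \<Omega>" "q \<in> \<Omega>" "p = s *\<^sub>R q"
  shows "s = 1"
proof (rule ccontr)
  assume ne: "s \<noteq> 1"
  define t where "t = 1 / (1 - s)"
  have "p \<in> affine hull \<Omega>" "q \<in> affine hull \<Omega>" using assms(2,3) hull_subset[of \<Omega> affine] by blast+
  then have "t *\<^sub>R p + (1 - t) *\<^sub>R q \<in> affine hull \<Omega>"
    by (intro mem_affine[OF affine_affine_hull]) auto
  moreover have "t *\<^sub>R p + (1 - t) *\<^sub>R q = (t * s + 1 - t) *\<^sub>R q"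
    using assms(4) by (simp add: algebra_simps)
  moreover have "t * s + 1 - t = 0" using ne unfolding t_def by (simp add: field_simps)
  ultimately show False using assms(1) by simp
qed

lemma zero_notin:
  assumes "0 \<notin> affine hull \<Omega>" shows "0 \<notin> \<Omega>"
  using assms hull_subset[of \<Omega> affine] by blast

lemma cone_add:
  assumes "convex \<Omega>" "a \<in> pos_cone \<Omega>" "b \<in> pos_cone \<Omega>"
  shows "a + b \<in> pos_cone \<Omega>"
proof -
  obtain l1 w1 l2 w2 where h: "a = l1 *\<^sub>R w1" "l1 \<ge> 0" "w1 \<in> \<Omega>" "b = l2 *\<^sub>R w2" "l2 \<ge> 0" "w2 \<in> \<Omega>"
    using assms(2,3) unfolding pos_cone_mem by blast
  show ?thesis
  proof (cases "l1 + l2 = 0")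
    case True
    then have "l1 = 0" "l2 = 0" using h by auto
    then have "a + b = 0 *\<^sub>R w1" using h by simp
    then show ?thesis unfolding pos_cone_mem using h by blast
  next
    case False
    then have s: "l1 + l2 > 0" using h by simp
    have "(l1/(l1+l2)) *\<^sub>R w1 + (l2/(l1+l2)) *\<^sub>R w2 \<in> \<Omega>"
      by (rule convexD[OF assms(1) h(3) h(6)]) (use s h in \<open>auto simp: add_divide_distrib[symmetric]\<close>)
    moreover have "a + b = (l1+l2) *\<^sub>R ((l1/(l1+l2)) *\<^sub>R w1 + (l2/(l1+l2)) *\<^sub>R w2)"
      using s h by (simp add: scaleR_add_right)
    ultimately show ?thesis unfolding pos_cone_mem using s by (metis less_imp_le)
  qed
qed

lemma cone_sum:
  assumes "convex \<Omega>" "\<Omega> \<noteq> {}" "finite A" "\<And>i. i \<in> A \<Longrightarrow> f i \<in> pos_cone \<Omega>"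
  shows "sum f A \<in> pos_cone \<Omega>"
  using assms(3,4)
proof (induction A rule: finite_induct)
  case empty
  obtain w where "w \<in> \<Omega>" using assms(2) by blast
  then show ?case unfolding pos_cone_mem by (intro exI[of _ 0] exI[of _ w]) simp
next
  case (insert x F)
  then show ?case using cone_add[OF assms(1)] by simp
qed

definition ext_ray :: "'a::real_vector set \<Rightarrow> 'a \<Rightarrow> bool" where
  "ext_ray C x \<longleftrightarrow> x \<in> C \<and> x \<noteq> 0 \<and> (\<forall>a b. a \<in> C \<longrightarrow> b \<in> C \<longrightarrow> x = a + b \<longrightarrow> (\<exists>t\<ge>0. a = t *\<^sub>R x))"

lemma extreme_ray:
  assumes "convex \<Omega>" "0 \<notin> affine hull \<Omega>" "w extreme_point_of \<Omega>"
  shows "ext_ray (pos_cone \<Omega>) w"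
proof -
  have wO: "w \<in> \<Omega>" using assms(3) extreme_point_of_def by blast
  have w0: "w \<noteq> 0" using wO zero_notin[OF assms(2)] by blast
  have "w \<in> pos_cone \<Omega>" unfolding pos_cone_mem by (intro exI[of _ 1] exI[of _ w]) (simp add: wO)
  moreover have "\<exists>t\<ge>0. a = t *\<^sub>R w" if a: "a \<in> pos_cone \<Omega>" and b: "b \<in> pos_cone \<Omega>" and wab: "w = a + b" for a b
  proof -
    obtain l1 w1 l2 w2 where h: "a = l1 *\<^sub>R w1" "l1 \<ge> 0" "w1 \<in> \<Omega>" "b = l2 *\<^sub>R w2" "l2 \<ge> 0" "w2 \<in> \<Omega>"
      using a b unfolding pos_cone_mem by blast
    have "l1 + l2 \<noteq> 0"
    proof
      assume "l1 + l2 = 0"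
      then have "l1 = 0" "l2 = 0" using h by auto
      then show False using wab h w0 by simp
    qed
    then have s: "l1 + l2 > 0" using h by simp
    define p where "p = (l1/(l1+l2)) *\<^sub>R w1 + (l2/(l1+l2)) *\<^sub>R w2"
    have pO: "p \<in> \<Omega>" unfolding p_def
      by (rule convexD[OF assms(1) h(3) h(6)]) (use s h in \<open>auto simp: add_divide_distrib[symmetric]\<close>)
    have "w = (l1+l2) *\<^sub>R p" unfolding p_def using s h wab by (simp add: scaleR_add_right)
    then have "l1 + l2 = 1" using scale_one[OF assms(2) wO pO] by blast
    then have wp: "w = l1 *\<^sub>R w1 + l2 *\<^sub>R w2" using wab h by simp
    show ?thesis
    proof (cases "l1 = 0")
      case True then show ?thesis using h by (intro exI[of _ 0]) simp
    next
      case l1: False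
      show ?thesis
      proof (cases "l2 = 0")
        case True then show ?thesis using h wab by (intro exI[of _ 1]) simp
      next
        case l2: False
        show ?thesis
        proof (cases "w1 = w2")
          case True
          then have "w = (l1 + l2) *\<^sub>R w1" using wp by (simp add: scaleR_add_left)
          then have "w = w1" using \<open>l1 + l2 = 1\<close> by simp
          then show ?thesis using h by (intro exI[of _ l1]) simp
        next
          case False
          have e: "1 - l2 = l1" using \<open>l1 + l2 = 1\<close> by simp
          have "0 < l2" "l2 < 1" using l1 l2 h \<open>l1 + l2 = 1\<close> by auto
          moreover have "w = (1 - l2) *\<^sub>R w1 + l2 *\<^sub>R w2" unfolding e by (rule wp)
          ultimately have "w \<in> open_segment w1 w2" unfolding in_segment using False by blast
          then show ?thesis using assms(3) h unfolding extreme_point_of_def by blast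
        qed
      qed
    qed
  qed
  ultimately show ?thesis unfolding ext_ray_def using w0 by blast
qed

lemma ray_map:
  assumes "linear J" "\<And>x y. J x = J y \<Longrightarrow> x = y" "J ` C = C" "ext_ray C x"
  shows "ext_ray C (J x)"
proof -
  have xC: "x \<in> C" "x \<noteq> 0" using assms(4) unfolding ext_ray_def by auto
  have "J x \<in> C" using xC assms(3) by blast
  moreover have "J x \<noteq> 0" using xC assms(2) linear_0[OF assms(1)] by metis
  moreover have "\<exists>t\<ge>0. a = t *\<^sub>R J x" if ha: "a \<in> C" and hb: "b \<in> C" and hab: "J x = a + b" for a b
  proof -
    obtain a' b' where a': "a' \<in> C" "a = J a'" and b': "b' \<in> C" "b = J b'"
      using ha hb assms(3) by (metis imageE)
    have "J x = J (a' + b')" using hab a' b' linear_add[OF assms(1)] by simp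
    then have "x = a' + b'" using assms(2) by blast
    then obtain t where "t \<ge> 0" "a' = t *\<^sub>R x" using assms(4) a' b' unfolding ext_ray_def by blast
    then show ?thesis using a' linear_scale[OF assms(1)] by auto
  qed
  ultimately show ?thesis unfolding ext_ray_def by blast
qed

lemma ray_ext:
  fixes \<Omega> :: "'a::euclidean_space set"
  assumes "compact \<Omega>" "convex \<Omega>" "0 \<notin> affine hull \<Omega>" "finite {w. w extreme_point_of \<Omega>}"
    "ext_ray (pos_cone \<Omega>) x"
  shows "\<exists>c e. c > 0 \<and> e extreme_point_of \<Omega> \<and> x = c *\<^sub>R e"
proof -
  let ?E = "{w. w extreme_point_of \<Omega>}"
  let ?C = "pos_cone \<Omega>"
  obtain l w where lw: "x = l *\<^sub>R w" "l \<ge> 0" "w \<in> \<Omega>"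
    using assms(5) unfolding ext_ray_def pos_cone_mem by blast
  have x0: "x \<noteq> 0" using assms(5) unfolding ext_ray_def by blast
  then have l0: "l > 0" using lw by (cases "l = 0") auto
  have EO: "?E \<subseteq> \<Omega>" using extreme_point_of_def by blast
  have "w \<in> convex hull ?E" using Krein_Milman_Minkowski[OF assms(1,2)] lw(3) by blast
  then obtain u where u: "\<forall>e\<in>?E. 0 \<le> u e" "sum u ?E = 1" "(\<Sum>e\<in>?E. u e *\<^sub>R e) = w"
    unfolding convex_hull_finite[OF assms(4)] by blast
  obtain i where i: "i \<in> ?E" "u i > 0"
  proof (rule ccontr)
    assume "\<not> thesis"
    then have "\<forall>e\<in>?E. u e = 0" using that u(1) by force
    then have "sum u ?E = 0" by simp
    then show False using u(2) by simp
  qed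
  define a where "a = (l * u i) *\<^sub>R i"
  define b where "b = (\<Sum>e\<in>?E-{i}. (l * u e) *\<^sub>R e)"
  have "x = l *\<^sub>R (\<Sum>e\<in>?E. u e *\<^sub>R e)" using lw u(3) by simp
  also have "\<dots> = (\<Sum>e\<in>?E. (l * u e) *\<^sub>R e)" by (simp add: scaleR_sum_right)
  also have "\<dots> = a + b" unfolding a_def b_def using sum.remove[OF assms(4) i(1)] by simp
  finally have xab: "x = a + b" .
  have aC: "a \<in> ?C" unfolding a_def pos_cone_mem using l0 i EO
    by (intro exI[of _ "l * u i"] exI[of _ i]) auto
  have bC: "b \<in> ?C" unfolding b_def
  proof (rule cone_sum[OF assms(2)])
    show "\<Omega> \<noteq> {}" using lw by blast
    show "finite (?E - {i})" using assms(4) by simp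
    fix e assume "e \<in> ?E - {i}"
    then show "(l * u e) *\<^sub>R e \<in> ?C" unfolding pos_cone_mem using l0 u(1) EO
      by (intro exI[of _ "l * u e"] exI[of _ e]) auto
  qed
  obtain t where t: "t \<ge> 0" "a = t *\<^sub>R x" using assms(5) aC bC xab unfolding ext_ray_def by blast
  have i0: "i \<noteq> 0" using i(1) EO zero_notin[OF assms(3)] by blast
  have a0: "a \<noteq> 0" unfolding a_def using l0 i(2) i0 by simp
  then have "t > 0" using t by (cases "t = 0") auto
  then have "x = (1 / t) *\<^sub>R a" using t(2) by simp
  then have "x = ((l * u i) / t) *\<^sub>R i" unfolding a_def by simp
  moreover have "(l * u i) / t > 0" using l0 i(2) \<open>t > 0\<close> by simp
  ultimately show ?thesis using i(1) by blast
qed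

theorem lemmaB3:
  fixes \<Omega> :: "(real ^ 'n) set" and J :: "real ^ 'n \<Rightarrow> real ^ 'n"
    and ip :: "real ^ 'n \<Rightarrow> real ^ 'n \<Rightarrow> real"
  assumes "state_space \<Omega>"
    and "finite {w. w extreme_point_of \<Omega>}"
    and "is_inner_product ip"
    and "linear J"
    and "strictly_positive ip J"
    and "J ` pos_cone \<Omega> = pos_cone \<Omega>"
  shows "\<forall>w. w extreme_point_of \<Omega> \<longrightarrow> (\<exists>\<mu>>0. J w = \<mu> *\<^sub>R w)"
proof (intro allI impI)
  fix w assume wext: "w extreme_point_of \<Omega>"
  have cpt: "compact \<Omega>" and cvx: "convex \<Omega>" and aff: "0 \<notin> affine hull \<Omega>"
    using assms(1) unfolding state_space_def by auto
  let ?C = "pos_cone \<Omega>"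
  have ipl: "ip x 0 = 0" for x using ip_lin2[OF assms(3)] by simp
  have injJ: "x = y" if "J x = J y" for x y
  proof (rule ccontr)
    assume "x \<noteq> y"
    then have "x - y \<noteq> 0" by simp
    then have "ip (x - y) (J (x - y)) > 0" using assms(5) unfolding strictly_positive_def by blast
    moreover have "J (x - y) = 0" using that linear_diff[OF assms(4)] by simp
    ultimately show False using ipl by simp
  qed
  have ray: "ext_ray ?C ((J^^k) w)" for k
  proof (induction k)
    case 0 then show ?case using extreme_ray[OF cvx aff wext] by simp
  next
    case (Suc k)
    have "ext_ray ?C (J ((J^^k) w))" by (rule ray_map[OF assms(4) injJ assms(6) Suc])
    then show ?case by simp
  qed
  have "\<forall>k. \<exists>c e. c > 0 \<and> e extreme_point_of \<Omega> \<and> (J^^k) w = c *\<^sub>R e"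
    using ray_ext[OF cpt cvx aff assms(2) ray] by blast
  then obtain g f where gf: "\<And>k. g k > 0" "\<And>k. f k extreme_point_of \<Omega>" "\<And>k. (J^^k) w = g k *\<^sub>R f k"
    by metis
  have "\<not> inj f"
  proof
    assume "inj f"
    have "range f \<subseteq> {w. w extreme_point_of \<Omega>}" using gf(2) by blast
    then have "finite (range f)" using assms(2) finite_subset by blast
    then have "finite (UNIV :: nat set)" using finite_imageD \<open>inj f\<close> by blast
    then show False by simp
  qed
  then obtain a b where ab: "a \<noteq> b" "f a = f b" unfolding inj_def by blast
  obtain k1 k2 where k: "k1 < k2" "f k1 = f k2"
  proof (cases "a < b")
    case True then show ?thesis using that ab by blast
  next
    case False then have "b < a" using ab by simp
    then show ?thesis using that ab by metis
  qed
  define d where "d = k2 - k1"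
  define c where "c = g k2 / g k1"
  have d0: "d > 0" using k unfolding d_def by simp
  have c0: "c > 0" unfolding c_def using gf(1) by simp
  have "(J^^k2) w = c *\<^sub>R (J^^k1) w"
    using gf(1)[of k1] k(2) unfolding c_def gf(3) by simp
  moreover have "(J^^k2) w = (J^^k1) ((J^^d) w)"
    using k(1) unfolding d_def by (metis funpow_add le_add_diff_inverse less_imp_le comp_apply)
  moreover have "c *\<^sub>R (J^^k1) w = (J^^k1) (c *\<^sub>R w)"
    using linear_scale[OF lin_funpow[OF assms(4)]] by simp
  ultimately have "(J^^k1) ((J^^d) w) = (J^^k1) (c *\<^sub>R w)" by simp
  then have Jd: "(J^^d) w = c *\<^sub>R w" using inj_funpow[of J k1 "(J^^d) w" "c *\<^sub>R w"] injJ by blast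
  define r where "r = root d c"
  have r0: "r > 0" unfolding r_def using d0 c0 by (rule real_root_gt_zero)
  have rd: "r ^ d = c" unfolding r_def using d0 c0 by (rule real_root_pow_pos)
  have "J w = r *\<^sub>R w"
  proof (rule ccontr)
    assume "J w \<noteq> r *\<^sub>R w"
    then have u0: "J w - r *\<^sub>R w \<noteq> 0" by simp
    obtain d' where d': "d = Suc d'" using d0 by (cases d) auto
    have "tele J r (J w - r *\<^sub>R w) d = 0" using tele_eq[OF assms(4)] Jd rd by simp
    moreover have "ip (J w - r *\<^sub>R w) (tele J r (J w - r *\<^sub>R w) (Suc d')) > 0"
      by (rule tele_pos[OF assms(3,5,4) u0 r0])
    ultimately show False using d' ipl by simp
  qed
  then show "\<exists>\<mu>>0. J w = \<mu> *\<^sub>R w" using r0 by blast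
qed

end
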